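(* Let $h:X\to X$ be a minimal homeomorphism of a compact connected Hausdorff space $X$ and let $\chi$ be an eigenfunction of $h$ whose image contains more than one point. Then $\chi$ is surjective.
   Context: An eigenfunction of $h$ is a continuous map $\chi:X\to\mathbb{R}/\mathbb{Z}$ such that $\chi\circ h=R_\alpha\circ\chi$ for some $\alpha\in\mathbb{R}/\mathbb{Z}$, where $R_\alpha(x)=x+\alpha$ is the rotation by $\alpha$. *)

theory Defs
  imports "HOL-Analysis.Analysis"
begin

text \<open>The circle R/Z, realised as the unit circle in the complex plane via
  t mod 1 maps to exp(2 pi i t). Rotation by alpha is multiplication by cis(2 pi alpha).\<close>

definition circleRZ :: "complex set" where
  "circleRZ = sphere 0 1"

definition rotRZ :: "real \<Rightarrow> complex \<Rightarrow> complex" where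
  "rotRZ \<alpha> z = cis (2 * pi * \<alpha>) * z"

definition minimal_homeo :: "'a topology \<Rightarrow> ('a \<Rightarrow> 'a) \<Rightarrow> bool" where
  "minimal_homeo X h \<longleftrightarrow> homeomorphic_map X X h \<and>
     (\<forall>A. closedin X A \<and> A \<noteq> {} \<and> h ` A = A \<longrightarrow> A = topspace X)"

definition eigenfunction :: "'a topology \<Rightarrow> ('a \<Rightarrow> 'a) \<Rightarrow> ('a \<Rightarrow> complex) \<Rightarrow> bool" where
  "eigenfunction X h chi \<longleftrightarrow> continuous_map X (top_of_set circleRZ) chi \<and>
     (\<exists>\<alpha>::real. \<forall>x\<in>topspace X. chi (h x) = rotRZ \<alpha> (chi x))"

end

theory Submission
  imports Defs
begin

lemma exp_ii_eq:
  fixes a b :: real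
  assumes "exp (\<i> * of_real a) = exp (\<i> * of_real b)"
  shows "\<exists>k::int. a - b = 2 * pi * k"
proof -
  from assms obtain n :: int where n: "\<i> * of_real a = \<i> * of_real b + (of_int (2 * n) * pi) * \<i>"
    by (auto simp: exp_eq)
  have "\<i> * complex_of_real (a - b) = \<i> * complex_of_real (2*pi*n)"
    using n by (simp add: algebra_simps)
  then have "complex_of_real (a - b) = complex_of_real (2*pi*n)" by simp
  then show ?thesis by (metis of_real_eq_iff)
qed

theorem lemma5p2:
  fixes X :: "'a topology" and h :: "'a \<Rightarrow> 'a" and chi :: "'a \<Rightarrow> complex"
  assumes "compact_space X" and "connected_space X" and "Hausdorff_space X"
    and "minimal_homeo X h"
    and "eigenfunction X h chi"
    and "\<exists>x\<in>topspace X. \<exists>y\<in>topspace X. chi x \<noteq> chi y"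
  shows "chi ` topspace X = circleRZ"
proof (rule ccontr)
  assume neq: "chi ` topspace X \<noteq> circleRZ"
  from assms(5) obtain \<alpha> where cm: "continuous_map X (top_of_set circleRZ) chi"
    and eig: "\<And>x. x \<in> topspace X \<Longrightarrow> chi (h x) = rotRZ \<alpha> (chi x)"
    unfolding eigenfunction_def by blast
  have cmE: "continuous_map X euclidean chi" and img: "chi ` topspace X \<subseteq> circleRZ"
    using cm by (auto simp: continuous_map_in_subtopology)
  from neq img obtain z where z: "z \<in> circleRZ" "z \<notin> chi ` topspace X" by blast
  have hom: "homeomorphic_map X X h" using assms(4) by (simp add: minimal_homeo_def)
  have hcont: "continuous_map X X h" using hom homeomorphic_imp_continuous_map by blast
  have hsurj: "h ` topspace X = topspace X" using hom homeomorphic_imp_surjective_map by blast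
  have hin: "\<And>x. x \<in> topspace X \<Longrightarrow> h x \<in> topspace X" using hsurj by blast
  define k where "k = - cnj z"
  define w where "w = (\<lambda>x. chi x * k)"
  define S where "S = circleRZ - {-1}"
  have nz: "norm z = 1" using z(1) by (simp add: circleRZ_def)
  have knz: "k \<noteq> 0" using nz by (auto simp: k_def)
  have wS: "w x \<in> S" if "x \<in> topspace X" for x
  proof -
    have c: "norm (chi x) = 1" using img that by (auto simp: circleRZ_def)
    have "norm (w x) = 1" using c nz by (simp add: w_def k_def norm_mult)
    moreover have "w x \<noteq> -1"
    proof
      assume "w x = -1"
      then have "chi x * cnj z = 1" by (simp add: w_def k_def)
      then have "chi x * cnj z * z = z" by simp
      moreover have "cnj z * z = 1" using nz by (metis complex_norm_square mult.commute of_real_1 power_one)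
      ultimately have "chi x = z" by (simp add: mult.assoc)
      then show False using z(2) that by blast
    qed
    ultimately show ?thesis by (simp add: S_def circleRZ_def)
  qed
  have Snot: "u \<notin> \<real>\<^sub>\<le>\<^sub>0" if "u \<in> S" for u
  proof
    assume "u \<in> \<real>\<^sub>\<le>\<^sub>0"
    then obtain r where r: "u = of_real r" "r \<le> 0" by (auto simp: nonpos_Reals_def)
    have "norm u = 1" using that by (simp add: S_def circleRZ_def)
    then have "r = -1" using r by simp
    then show False using that r by (simp add: S_def)
  qed
  define \<theta> where "\<theta> = (\<lambda>x. Im (Ln (w x)))"
  have wcont: "continuous_map X euclidean w"
    unfolding w_def using continuous_map_compose[OF cmE, of euclidean "\<lambda>z. z * k"]
    by (simp add: o_def continuous_intros)
  have thcont: "continuous_map X euclideanreal \<theta>"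
  proof -
    have a: "continuous_map X (top_of_set S) w"
      using wcont wS by (auto simp: continuous_map_in_subtopology)
    have b: "continuous_map (top_of_set S) euclideanreal (\<lambda>u. Im (Ln u))"
      using Snot by (auto intro!: continuous_intros)
    show ?thesis using continuous_map_compose[OF a b] by (simp add: o_def \<theta>_def)
  qed
  have wexp: "w x = exp (\<i> * of_real (\<theta> x))" if "x \<in> topspace X" for x
  proof -
    have "w x \<noteq> 0" using wS[OF that] Snot[of 0] by auto
    moreover have "norm (w x) = 1" using wS[OF that] by (simp add: S_def circleRZ_def)
    ultimately have "Ln (w x) = \<i> * of_real (\<theta> x)"
      by (simp add: \<theta>_def complex_eq_iff Re_Ln)
    then show ?thesis using \<open>w x \<noteq> 0\<close> by (metis exp_Ln)
  qed
  have thb: "\<bar>\<theta> x\<bar> \<le> pi" if "x \<in> topspace X" for x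
  proof -
    have "w x \<noteq> 0" using wS[OF that] Snot[of 0] by auto
    then show ?thesis using mpi_less_Im_Ln[of "w x"] Im_Ln_le_pi[of "w x"]
      unfolding \<theta>_def by (auto simp: abs_le_iff)
  qed
  define c where "c = cis (2 * pi * \<alpha>)"
  have wh: "w (h x) = c * w x" if "x \<in> topspace X" for x
    using eig[OF that] by (simp add: w_def rotRZ_def c_def mult.assoc)
  define f where "f = (\<lambda>x. \<theta> (h x) - \<theta> x)"
  have fexp: "exp (\<i> * of_real (f x)) = c" if "x \<in> topspace X" for x
  proof -
    have "exp (\<i> * of_real (\<theta> (h x))) = c * exp (\<i> * of_real (\<theta> x))"
      using wh[OF that] wexp[OF that] wexp[OF hin[OF that]] by simp
    then show ?thesis unfolding f_def
      by (simp add: algebra_simps exp_diff)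
  qed
  have fcont: "continuous_map X euclideanreal f"
    unfolding f_def using thcont hcont
    by (intro continuous_intros) (auto intro: continuous_map_compose[of X X h, unfolded o_def])
  from assms(6) obtain x0 where x0: "x0 \<in> topspace X" by blast
  have fconst: "f x = f x0" if xX: "x \<in> topspace X" for x
  proof (rule ccontr)
    assume ne: "f x \<noteq> f x0"
    have lat: "\<exists>k::int. f y - f x0 = 2 * pi * k" if "y \<in> topspace X" for y
      using exp_ii_eq fexp[OF that] fexp[OF x0] by simp
    have conn: "connected (f ` topspace X)"
      using connectedin_continuous_map_image[OF fcont, of "topspace X"] assms(2)
      by (simp add: connectedin_topspace)
    obtain kk :: int where kk: "f x - f x0 = 2 * pi * kk" using lat[OF xX] by blast
    have "kk \<noteq> 0" using ne kk by auto
    define m where "m = (if kk > 0 then f x0 + pi else f x0 - pi)"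
    have "m \<in> f ` topspace X"
    proof (cases "kk > 0")
      case True
      then have "real_of_int kk \<ge> 1" by simp
      then have e: "2 * pi * kk \<ge> 2 * pi * 1" using pi_gt_zero by (intro mult_left_mono) auto
      have "m = f x0 + pi" using True by (simp add: m_def)
      then have "f x0 \<le> m" "m \<le> f x" using kk pi_gt_zero e by linarith+
      then show ?thesis using conn x0 xX unfolding connected_iff_interval by blast
    next
      case False
      then have "kk < 0" using \<open>kk \<noteq> 0\<close> by simp
      then have "real_of_int kk \<le> -1" by simp
      then have e: "2 * pi * kk \<le> 2 * pi * (-1)" using pi_gt_zero by (intro mult_left_mono) auto
      have "m = f x0 - pi" using False by (simp add: m_def)
      then have "f x \<le> m" "m \<le> f x0" using kk pi_gt_zero e by linarith+
      then show ?thesis using conn x0 xX unfolding connected_iff_interval by blast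
    qed
    then obtain y where y: "y \<in> topspace X" "f y = m" by blast
    obtain j :: int where j: "f y - f x0 = 2 * pi * j" using lat[OF y(1)] by blast
    have "2 * pi * j = pi \<or> 2 * pi * j = - pi" using y(2) j by (auto simp: m_def split: if_splits)
    then have "real_of_int (2 * j) * pi = 1 * pi \<or> real_of_int (2 * j) * pi = (-1) * pi"
      by (auto simp: algebra_simps)
    then have "real_of_int (2 * j) = 1 \<or> real_of_int (2 * j) = -1"
      using pi_gt_zero by (metis mult_right_cancel pi_neq_zero)
    then have "2 * j = 1 \<or> 2 * j = -1" by linarith
    then show False by presburger
  qed
  define \<delta> where "\<delta> = f x0"
  have orb: "(h ^^ n) x0 \<in> topspace X \<and> \<theta> ((h ^^ n) x0) = \<theta> x0 + n * \<delta>" for n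
  proof (induction n)
    case 0 then show ?case using x0 by simp
  next
    case (Suc n)
    then have "f ((h ^^ n) x0) = \<delta>" using fconst \<delta>_def by blast
    then show ?case using Suc hin by (simp add: f_def algebra_simps)
  qed
  have "\<delta> = 0"
  proof (rule ccontr)
    assume "\<delta> \<noteq> 0"
    obtain n :: nat where n: "n > 3 * pi / \<bar>\<delta>\<bar>" using reals_Archimedean2 by blast
    have "\<bar>\<theta> ((h ^^ n) x0) - \<theta> x0\<bar> \<le> 2 * pi"
      using thb[OF conjunct1[OF orb[of n]]] thb[OF x0] by linarith
    then have "\<bar>n * \<delta>\<bar> \<le> 2 * pi" using orb[of n] by simp
    moreover have "n * \<bar>\<delta>\<bar> > 3 * pi" using n \<open>\<delta> \<noteq> 0\<close> by (simp add: field_simps)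
    ultimately show False using pi_gt_zero by (simp add: abs_mult)
  qed
  then have chih: "chi (h x) = chi x" if "x \<in> topspace X" for x
  proof -
    have "\<theta> (h x) = \<theta> x" using fconst[OF that] \<open>\<delta> = 0\<close> by (simp add: f_def \<delta>_def)
    then have "w (h x) = w x" using wexp that hin by simp
    then show ?thesis using knz by (simp add: w_def)
  qed
  define A where "A = {x \<in> topspace X. chi x \<in> {chi x0}}"
  have Acl: "closedin X A" unfolding A_def
    by (rule closedin_continuous_map_preimage[OF cmE]) simp
  have Ane: "A \<noteq> {}" using x0 by (auto simp: A_def)
  have hA: "h ` A = A"
  proof
    show "h ` A \<subseteq> A" using chih hin by (auto simp: A_def)
    show "A \<subseteq> h ` A"
    proof
      fix y assume y: "y \<in> A"
      then obtain x where x: "x \<in> topspace X" "y = h x" using hsurj by (auto simp: A_def)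
      then have "x \<in> A" using y chih by (auto simp: A_def)
      then show "y \<in> h ` A" using x by blast
    qed
  qed
  have "A = topspace X" using assms(4) Acl Ane hA by (simp add: minimal_homeo_def)
  then have "\<forall>x\<in>topspace X. chi x = chi x0" by (auto simp: A_def)
  then show False using assms(6) by metis
qed

end
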